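(* Suppose $\theta_k>0$ for all $k=1,\dots,K$. Then $$\lim_{t\to\infty}t\big[1-F\{q_1(t),\dots,q_{n_s}(t)\}\big]=n_s,$$ i.e. the $n_s$-dimensional extremal coefficient $V(1,\dots,1)$ equals $n_s$ (joint extremal independence).
   Context: Standing model. Fix $\alpha\in(0,1)$, $\alpha_0>0$, $\tau>0$, an integer $K\ge1$ and tilting parameters $\theta_1,\dots,\theta_K\ge0$. Fix locations $\boldsymbol s_1,\dots,\boldsymbol s_{n_s}$ and nonnegative weights $\omega_{kj}$ with $\{k:\omega_{kj}\ne0\}\neq\emptyset$ for every $j$. Let $Z_1,\dots,Z_K$ be independent positive random variables with $E[e^{-sZ_k}]=\exp[-\{(\theta_k+s)^\alpha-\theta_k^\alpha\}]$, $s\ge0$. Let $\epsilon_1,\dots,\epsilon_{n_s}$ be i.i.d., independent of the $Z_k$, with $\Pr(\epsilon_j\le x)=\exp\{-(x/\tau)^{-1/\alpha_0}\}$, $x>0$. Define $X_j=\epsilon_j\big(\sum_{k=1}^K\omega_{kj}^{1/\alpha}Z_k\big)^{\alpha_0}$, $F_j$ its distribution function, $q_j(t)=F_j^{-1}(1-1/t)$, and $F$ the joint distribution function of $(X_1,\dots,X_{n_s})$. *)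

theory Defs
  imports "HOL-Probability.Probability"
begin

definition cdf_rv :: "'a measure \<Rightarrow> ('a \<Rightarrow> real) \<Rightarrow> real \<Rightarrow> real" where
  "cdf_rv M X x = measure M {\<omega> \<in> space M. X \<omega> \<le> x}"

definition gen_inv :: "(real \<Rightarrow> real) \<Rightarrow> real \<Rightarrow> real" where
  "gen_inv G p = Inf {x. p \<le> G x}"

definition joint_cdf :: "'a measure \<Rightarrow> (nat \<Rightarrow> 'a \<Rightarrow> real) \<Rightarrow> nat \<Rightarrow> (nat \<Rightarrow> real) \<Rightarrow> real" where
  "joint_cdf M X n x = measure M {\<omega> \<in> space M. \<forall>j\<in>{1..n}. X j \<omega> \<le> x j}"

definition model_X :: "real \<Rightarrow> real \<Rightarrow> nat \<Rightarrow> (nat \<Rightarrow> nat \<Rightarrow> real)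
    \<Rightarrow> (nat \<Rightarrow> 'a \<Rightarrow> real) \<Rightarrow> (nat \<Rightarrow> 'a \<Rightarrow> real) \<Rightarrow> nat \<Rightarrow> 'a \<Rightarrow> real" where
  "model_X \<alpha> \<alpha>0 K w Z eps j \<omega> =
     eps j \<omega> * (\<Sum>k=1..K. w k j powr (1/\<alpha>) * Z k \<omega>) powr \<alpha>0"

end

theory Submission
  imports Defs
begin

locale mdl = prob_space M
  for M :: "'a measure" +
  fixes \<alpha> \<alpha>0 \<tau> :: real and K ns :: nat
    and \<theta> :: "nat \<Rightarrow> real" and w :: "nat \<Rightarrow> nat \<Rightarrow> real"
    and Z eps :: "nat \<Rightarrow> 'a \<Rightarrow> real"
  assumes a_pos: "0 < \<alpha>" and a_lt: "\<alpha> < 1" and a0: "0 < \<alpha>0" and tau: "0 < \<tau>" and K1: "1 \<le> K"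
    and th: "\<forall>k\<in>{1..K}. 0 < \<theta> k"
    and wpos: "\<forall>k\<in>{1..K}. \<forall>j\<in>{1..ns}. 0 \<le> w k j"
    and wnz: "\<forall>j\<in>{1..ns}. \<exists>k\<in>{1..K}. w k j \<noteq> 0"
    and ind: "indep_vars (\<lambda>_. borel) (case_sum Z eps) (Inl ` {1..K} \<union> Inr ` {1..ns})"
    and Zpos: "\<forall>k\<in>{1..K}. AE \<omega> in M. 0 < Z k \<omega>"
    and lap: "\<forall>k\<in>{1..K}. \<forall>s::real. 0 \<le> s \<longrightarrow>
           expectation (\<lambda>\<omega>. exp (- s * Z k \<omega>))
             = exp (- ((\<theta> k + s) powr \<alpha> - \<theta> k powr \<alpha>))"
    and ecdf: "\<forall>j\<in>{1..ns}. \<forall>x::real. 0 < x \<longrightarrow>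
           cdf_rv M (eps j) x = exp (- ((x / \<tau>) powr (- 1 / \<alpha>0)))"
begin

definition S :: "nat \<Rightarrow> 'a \<Rightarrow> real" where
  "S j \<omega> = (\<Sum>k=1..K. w k j powr (1/\<alpha>) * Z k \<omega>)"

abbreviation X where "X \<equiv> model_X \<alpha> \<alpha>0 K w Z eps"

lemma X_eq: "X j \<omega> = eps j \<omega> * S j \<omega> powr \<alpha>0"
  by (simp add: model_X_def S_def)

lemma Z_meas: "k \<in> {1..K} \<Longrightarrow> Z k \<in> borel_measurable M"
proof -
  assume k: "k \<in> {1..K}"
  have "random_variable borel (case_sum Z eps (Inl k))"
    using ind k unfolding indep_vars_def by blast
  then show ?thesis by simp
qed

lemma eps_meas: "j \<in> {1..ns} \<Longrightarrow> eps j \<in> borel_measurable M"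
proof -
  assume k: "j \<in> {1..ns}"
  have "random_variable borel (case_sum Z eps (Inr j))"
    using ind k unfolding indep_vars_def by blast
  then show ?thesis by simp
qed

lemma S_meas: "S j \<in> borel_measurable M"
  unfolding S_def by (intro borel_measurable_sum borel_measurable_times borel_measurable_const Z_meas) auto

lemma X_meas: "j \<in> {1..ns} \<Longrightarrow> X j \<in> borel_measurable M"
  unfolding X_eq[abs_def] using eps_meas S_meas by measurable

end

context mdl begin

lemma cdf_distr_eq: "random_variable borel Y \<Longrightarrow> cdf (distr M borel Y) x = cdf_rv M Y x"
  unfolding cdf_def cdf_rv_def
  by (subst measure_distr) (auto intro!: arg_cong[where f="measure M"])

definition Fe :: "real \<Rightarrow> real" where "Fe x = exp (- ((x / \<tau>) powr (- 1 / \<alpha>0)))"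

lemma eps_cdf: "j \<in> {1..ns} \<Longrightarrow> 0 < x \<Longrightarrow> cdf_rv M (eps j) x = Fe x"
  using ecdf unfolding Fe_def by blast

lemma Fe_cont: "0 < x \<Longrightarrow> isCont Fe x"
  unfolding Fe_def using tau by (intro continuous_intros) auto

lemma Fe_lim0: "(Fe \<longlongrightarrow> 0) (at_right 0)"
  unfolding Fe_def using tau a0 by real_asymp

lemma eps_cdf0: assumes j: "j \<in> {1..ns}" shows "cdf (distr M borel (eps j)) 0 = 0"
proof -
  let ?D = "distr M borel (eps j)"
  interpret D: real_distribution ?D using eps_meas[OF j] by simp
  have e: "eventually (\<lambda>x. Fe x = cdf ?D x) (at_right 0)"
    unfolding eventually_at_right[OF zero_less_one]
    using j by (auto intro!: exI[of _ 1] simp: cdf_distr_eq eps_meas eps_cdf)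
  have "(cdf ?D \<longlongrightarrow> cdf ?D 0) (at_right 0)"
    using D.cdf_is_right_cont by (simp add: continuous_within)
  moreover have "(cdf ?D \<longlongrightarrow> 0) (at_right 0)"
    using Fe_lim0 tendsto_cong[OF e] by simp
  ultimately show ?thesis using tendsto_unique by force
qed

lemma eps_atom: assumes j: "j \<in> {1..ns}" shows "measure M {\<omega>\<in>space M. eps j \<omega> = c} = 0"
proof -
  let ?D = "distr M borel (eps j)"
  interpret D: real_distribution ?D using eps_meas[OF j] by simp
  have eq: "measure ?D {c} = measure M {\<omega>\<in>space M. eps j \<omega> = c}"
    using eps_meas[OF j] by (subst measure_distr) (auto intro!: arg_cong[where f="measure M"])
  show ?thesis
  proof (cases "c > 0")
    case True
    have e: "eventually (\<lambda>x. x \<in> {0<..}) (nhds c)"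
      using True by (intro eventually_nhds_in_open) auto
    have "eventually (\<lambda>x. cdf ?D x = Fe x) (nhds c)"
      using e by eventually_elim (use j in \<open>auto simp: cdf_distr_eq eps_meas eps_cdf\<close>)
    then have "isCont (cdf ?D) c"
      using isCont_cong Fe_cont[OF True] by blast
    then show ?thesis using D.isCont_cdf eq by simp
  next
    case False
    have "measure ?D {c} \<le> measure ?D {..0}"
      using False by (intro D.finite_measure_mono) auto
    also have "\<dots> = 0" using eps_cdf0[OF j] by (simp add: cdf_def)
    finally show ?thesis using eq by (simp add: measure_nonneg antisym)
  qed
qed

lemma eps_le0: assumes j: "j \<in> {1..ns}" shows "prob {\<omega>\<in>space M. eps j \<omega> \<le> 0} = 0"
  using eps_cdf0[OF j] eps_meas[OF j] by (simp add: cdf_distr_eq cdf_rv_def)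

lemma eps_tail: assumes j: "j \<in> {1..ns}" and x: "0 < x"
  shows "prob {\<omega>\<in>space M. x < eps j \<omega>} = 1 - Fe x"
proof -
  have "{\<omega>\<in>space M. x < eps j \<omega>} = space M - {\<omega>\<in>space M. eps j \<omega> \<le> x}" by auto
  then have "prob {\<omega>\<in>space M. x < eps j \<omega>} = 1 - prob {\<omega>\<in>space M. eps j \<omega> \<le> x}"
    using eps_meas[OF j] by (simp add: prob_compl)
  then show ?thesis using eps_cdf[OF j x] by (simp add: cdf_rv_def)
qed

lemma Fe_upper: assumes x: "0 < x" shows "1 - Fe x \<le> (x / \<tau>) powr (- 1 / \<alpha>0)"
  unfolding Fe_def using exp_ge_add_one_self[of "- ((x / \<tau>) powr (- 1 / \<alpha>0))"] by linarith

lemma Fe_lower: assumes x: "\<tau> \<le> x" shows "(x / \<tau>) powr (- 1 / \<alpha>0) / 2 \<le> 1 - Fe x"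
proof -
  define u where "u = (x / \<tau>) powr (- 1 / \<alpha>0)"
  have u0: "0 \<le> u" unfolding u_def by simp
  have "1 \<le> x / \<tau>" using x tau by simp
  then have u1: "u \<le> 1" unfolding u_def using a0
    by (smt (verit, ccfv_SIG) powr_less_one powr_one_eq_one zero_le_divide_iff)
  have "1 + u \<le> exp u" by (rule exp_ge_add_one_self)
  then have "exp (- u) \<le> 1 / (1 + u)" using u0
    by (simp add: exp_minus divide_simps)
  also have "\<dots> \<le> 1 - u / 2"
  proof -
    have "u * u \<le> u" using u0 u1 by (simp add: mult_left_le)
    then show ?thesis using u0 by (simp add: divide_simps) (simp add: algebra_simps)
  qed
  finally show ?thesis unfolding Fe_def u_def[symmetric] by simp
qed

end

context mdl begin

lemma indep_eps: assumes i: "i \<in> {1..ns}" and j: "j \<in> {1..ns}" and ij: "i \<noteq> j"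
  shows "indep_var borel (eps i) borel (eps j)"
proof -
  have "indep_var borel ((\<lambda>f. f (Inr i)) \<circ> (\<lambda>\<omega>. restrict (\<lambda>x. case_sum Z eps x \<omega>) {Inr i}))
                  borel ((\<lambda>f. f (Inr j)) \<circ> (\<lambda>\<omega>. restrict (\<lambda>x. case_sum Z eps x \<omega>) {Inr j}))"
    using i j ij
    by (intro indep_var_compose[OF indep_var_restrict[OF ind]] measurable_component_singleton) auto
  also have "(\<lambda>f. f (Inr i)) \<circ> (\<lambda>\<omega>. restrict (\<lambda>x. case_sum Z eps x \<omega>) {Inr i}) = eps i"
    by (auto simp: fun_eq_iff)
  also have "(\<lambda>f. f (Inr j)) \<circ> (\<lambda>\<omega>. restrict (\<lambda>x. case_sum Z eps x \<omega>) {Inr j}) = eps j"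
    by (auto simp: fun_eq_iff)
  finally show ?thesis .
qed

lemma indep_S_eps: assumes j: "j \<in> {1..ns}"
  shows "indep_var borel (S j) borel (eps j)"
proof -
  let ?A = "Inl ` {1..K} :: (nat + nat) set"
  have m: "(\<lambda>f. \<Sum>k=1..K. w k j powr (1/\<alpha>) * f (Inl k)) \<in> borel_measurable (PiM ?A (\<lambda>_. borel))"
    by (intro borel_measurable_sum borel_measurable_times borel_measurable_const measurable_component_singleton) auto
  have "indep_var borel ((\<lambda>f. \<Sum>k=1..K. w k j powr (1/\<alpha>) * f (Inl k)) \<circ> (\<lambda>\<omega>. restrict (\<lambda>x. case_sum Z eps x \<omega>) ?A))
                  borel ((\<lambda>f. f (Inr j)) \<circ> (\<lambda>\<omega>. restrict (\<lambda>x. case_sum Z eps x \<omega>) {Inr j}))"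
    using j
    by (intro indep_var_compose[OF indep_var_restrict[OF ind]] measurable_component_singleton m) auto
  also have "(\<lambda>f. \<Sum>k=1..K. w k j powr (1/\<alpha>) * f (Inl k)) \<circ> (\<lambda>\<omega>. restrict (\<lambda>x. case_sum Z eps x \<omega>) ?A) = S j"
    by (auto simp: fun_eq_iff S_def intro!: sum.cong)
  also have "(\<lambda>f. f (Inr j)) \<circ> (\<lambda>\<omega>. restrict (\<lambda>x. case_sum Z eps x \<omega>) {Inr j}) = eps j"
    by (auto simp: fun_eq_iff)
  finally show ?thesis .
qed

lemma indep_prob:
  assumes "indep_var borel U borel V" "A \<in> sets borel" "B \<in> sets borel"
  shows "prob {\<omega>\<in>space M. U \<omega> \<in> A \<and> V \<omega> \<in> B} = prob {\<omega>\<in>space M. U \<omega> \<in> A} * prob {\<omega>\<in>space M. V \<omega> \<in> B}"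
proof -
  have "prob {\<omega>\<in>space M. U \<omega> \<in> A \<and> V \<omega> \<in> B} = prob ((\<lambda>x. (U x, V x)) -` (A \<times> B) \<inter> space M)"
    by (auto intro!: arg_cong[where f=prob])
  also have "\<dots> = prob (U -` A \<inter> space M) * prob (V -` B \<inter> space M)"
    using assms by (intro indep_varD) auto
  also have "prob (U -` A \<inter> space M) = prob {\<omega>\<in>space M. U \<omega> \<in> A}"
    by (auto intro!: arg_cong[where f=prob])
  also have "prob (V -` B \<inter> space M) = prob {\<omega>\<in>space M. V \<omega> \<in> B}"
    by (auto intro!: arg_cong[where f=prob])
  finally show ?thesis .
qed

end

context mdl begin

lemma S_pos: assumes j: "j \<in> {1..ns}" shows "AE \<omega> in M. 0 < S j \<omega>"
proof -
  obtain k0 where k0: "k0 \<in> {1..K}" "w k0 j \<noteq> 0" using wnz j by blast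
  have "AE \<omega> in M. \<forall>k\<in>{1..K}. 0 < Z k \<omega>"
    using Zpos by (intro AE_finite_allI) auto
  then show ?thesis
  proof eventually_elim
    case (elim \<omega>)
    have w0: "\<And>k. k \<in> {1..K} \<Longrightarrow> 0 \<le> w k j" using wpos j by auto
    show ?case unfolding S_def
    proof (rule sum_pos2[OF _ k0(1)])
      show "0 < w k0 j powr (1 / \<alpha>) * Z k0 \<omega>"
        using k0 w0[OF k0(1)] elim k0(1) by (intro mult_pos_pos) auto
      show "\<And>k. k \<in> {1..K} \<Longrightarrow> 0 \<le> w k j powr (1 / \<alpha>) * Z k \<omega>"
        using elim by (intro mult_nonneg_nonneg) (auto simp: less_imp_le)
    qed simp
  qed
qed

lemma eps_pos: assumes j: "j \<in> {1..ns}" shows "AE \<omega> in M. 0 < eps j \<omega>"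
proof -
  have "emeasure M {\<omega>\<in>space M. \<not> 0 < eps j \<omega>} = 0"
    using eps_le0[OF j] eps_meas[OF j] by (simp add: not_less emeasure_eq_measure)
  then show ?thesis
    by (subst AE_iff_measurable[OF _ refl]) (use eps_meas[OF j] in auto)
qed

lemma X_pos: assumes j: "j \<in> {1..ns}" shows "AE \<omega> in M. 0 < X j \<omega>"
  using S_pos[OF j] eps_pos[OF j] by eventually_elim (simp add: X_eq)

lemma X_atom: assumes j: "j \<in> {1..ns}" and x: "0 < x"
  shows "prob {\<omega>\<in>space M. X j \<omega> = x} = 0"
proof -
  let ?D1 = "distr M borel (S j)" and ?D2 = "distr M borel (eps j)"
  have iv: "indep_var borel (S j) borel (eps j)" by (rule indep_S_eps[OF j])
  then have deq: "?D1 \<Otimes>\<^sub>M ?D2 = distr M (borel \<Otimes>\<^sub>M borel) (\<lambda>\<omega>. (S j \<omega>, eps j \<omega>))"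
    using indep_var_distribution_eq by blast
  interpret D1: prob_space ?D1 using S_meas by (simp add: prob_space_distr)
  interpret D2: prob_space ?D2 using eps_meas[OF j] by (simp add: prob_space_distr)
  interpret P: pair_sigma_finite ?D1 ?D2 ..
  define h where "h = (\<lambda>(s::real, e::real). e * s powr \<alpha>0)"
  have hm: "h \<in> borel_measurable (borel \<Otimes>\<^sub>M borel)" unfolding h_def by measurable
  define B where "B = h -` {x} \<inter> space (borel \<Otimes>\<^sub>M borel)"
  have B: "B \<in> sets (borel \<Otimes>\<^sub>M borel)" unfolding B_def using hm by (intro measurable_sets) auto
  have pm: "(\<lambda>\<omega>. (S j \<omega>, eps j \<omega>)) \<in> measurable M (borel \<Otimes>\<^sub>M borel)"
    using S_meas eps_meas[OF j] by (intro measurable_Pair) auto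
  have "emeasure M {\<omega>\<in>space M. X j \<omega> = x} = emeasure (distr M (borel \<Otimes>\<^sub>M borel) (\<lambda>\<omega>. (S j \<omega>, eps j \<omega>))) B"
    using B pm by (subst emeasure_distr) (auto simp: B_def h_def X_eq space_pair_measure intro!: arg_cong[where f="emeasure M"])
  also have "\<dots> = emeasure (?D1 \<Otimes>\<^sub>M ?D2) B" using deq by simp
  also have "\<dots> = (\<integral>\<^sup>+ s. emeasure ?D2 (Pair s -` B) \<partial>?D1)"
    using B by (simp add: D2.emeasure_pair_measure_alt)
  also have "\<dots> = (\<integral>\<^sup>+ s. 0 \<partial>?D1)"
  proof (intro nn_integral_cong)
    fix s
    show "emeasure ?D2 (Pair s -` B) = 0"
    proof (cases "s powr \<alpha>0 = 0")
      case True
      then have "Pair s -` B = {}" using x by (auto simp: B_def h_def)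
      then show ?thesis by simp
    next
      case False
      then have sub: "Pair s -` B \<subseteq> {x / s powr \<alpha>0}" by (auto simp: B_def h_def field_simps)
      have "emeasure ?D2 {x / s powr \<alpha>0} = emeasure M {\<omega>\<in>space M. eps j \<omega> = x / s powr \<alpha>0}"
        using eps_meas[OF j] by (subst emeasure_distr) (auto intro!: arg_cong[where f="emeasure M"])
      also have "\<dots> = 0" using eps_atom[OF j] eps_meas[OF j] by (simp add: emeasure_eq_measure)
      moreover have "emeasure ?D2 (Pair s -` B) \<le> emeasure ?D2 {x / s powr \<alpha>0}"
        using sub by (intro emeasure_mono) auto
      ultimately show ?thesis by simp
    qed
  qed
  finally show ?thesis by (simp add: emeasure_eq_measure)
qed

end

context mdl begin

definition q :: "nat \<Rightarrow> real \<Rightarrow> real" where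
  "q j t = gen_inv (cdf_rv M (X j)) (1 - 1 / t)"

lemma quant: assumes j: "j \<in> {1..ns}" and t: "1 < t"
  shows "0 < q j t" "cdf_rv M (X j) (q j t) = 1 - 1/t"
proof -
  let ?D = "distr M borel (X j)"
  interpret D: real_distribution ?D using X_meas[OF j] by simp
  have cdfeq: "cdf ?D = cdf_rv M (X j)" using X_meas[OF j] by (simp add: fun_eq_iff cdf_distr_eq)
  define p where "p = 1 - 1 / t"
  have p0: "0 < p" "p < 1" using t by (auto simp: p_def field_simps)
  define A where "A = {x. p \<le> cdf ?D x}"
  have qA: "q j t = Inf A" unfolding q_def gen_inv_def A_def p_def cdfeq ..
  have c0: "cdf ?D 0 = 0"
  proof -
    have "cdf ?D 0 = prob {\<omega>\<in>space M. X j \<omega> \<le> 0}"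
      using cdfeq by (simp add: cdf_rv_def)
    also have "\<dots> = 0" using X_pos[OF j] by (intro prob_eq_0_AE) auto
    finally show ?thesis .
  qed
  have Apos: "\<And>x. x \<in> A \<Longrightarrow> 0 < x"
  proof (rule ccontr)
    fix x assume "x \<in> A" "\<not> 0 < x"
    then have "p \<le> cdf ?D x" "cdf ?D x \<le> cdf ?D 0" by (auto simp: A_def intro!: D.cdf_nondecreasing)
    then show False using c0 p0 by simp
  qed
  have "eventually (\<lambda>x. p < cdf ?D x) at_top"
    using D.cdf_lim_at_top_prob p0(2) by (simp add: order_tendsto_iff)
  then obtain x0 where "p < cdf ?D x0" by (auto simp: eventually_at_top_linorder)
  then have Ane: "A \<noteq> {}" unfolding A_def by (auto intro!: less_imp_le)
  have Abdd: "bdd_below A" using Apos by (auto intro!: bdd_belowI[of _ 0] less_imp_le)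
  have ge: "p \<le> cdf ?D (Inf A)"
  proof (rule tendsto_lowerbound)
    show "(cdf ?D \<longlongrightarrow> cdf ?D (Inf A)) (at_right (Inf A))"
      using D.cdf_is_right_cont by (simp add: continuous_within)
    show "eventually (\<lambda>x. p \<le> cdf ?D x) (at_right (Inf A))"
    proof (intro eventually_at_rightI[of "Inf A" "Inf A + 1"])
      fix x assume "x \<in> {Inf A<..<Inf A + 1}"
      then obtain a where "a \<in> A" "a < x" using cInf_less_iff[OF Ane Abdd] by auto
      then show "p \<le> cdf ?D x" unfolding A_def using D.cdf_nondecreasing[of a x] by auto
    qed simp
  qed simp
  then have InfA: "Inf A \<in> A" unfolding A_def by simp
  then show "0 < q j t" using Apos qA by simp
  have "measure ?D {Inf A} = prob {\<omega>\<in>space M. X j \<omega> = Inf A}"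
    using X_meas[OF j] by (subst measure_distr) (auto intro!: arg_cong[where f=prob])
  also have "\<dots> = 0" using X_atom[OF j Apos[OF InfA]] .
  finally have "isCont (cdf ?D) (Inf A)" using D.isCont_cdf by simp
  then have lim: "(cdf ?D \<longlongrightarrow> cdf ?D (Inf A)) (at_left (Inf A))"
    by (simp add: isCont_def filterlim_at_split)
  have le: "cdf ?D (Inf A) \<le> p"
  proof (rule tendsto_upperbound[OF lim])
    show "eventually (\<lambda>x. cdf ?D x \<le> p) (at_left (Inf A))"
    proof (intro eventually_at_leftI[of "Inf A - 1" "Inf A"])
      fix x assume x: "x \<in> {Inf A - 1<..<Inf A}"
      have "x \<notin> A" using cInf_lower[OF _ Abdd, of x] x by auto
      then show "cdf ?D x \<le> p" unfolding A_def by simp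
    qed simp
  qed simp
  show "cdf_rv M (X j) (q j t) = 1 - 1/t"
    using ge le qA cdfeq p_def by (metis antisym)
qed

lemma quant_tail: assumes j: "j \<in> {1..ns}" and t: "1 < t"
  shows "prob {\<omega>\<in>space M. q j t < X j \<omega>} = 1 / t"
proof -
  have "{\<omega>\<in>space M. q j t < X j \<omega>} = space M - {\<omega>\<in>space M. X j \<omega> \<le> q j t}" by auto
  then have "prob {\<omega>\<in>space M. q j t < X j \<omega>} = 1 - prob {\<omega>\<in>space M. X j \<omega> \<le> q j t}"
    using X_meas[OF j] by (simp add: prob_compl)
  then show ?thesis using quant(2)[OF j t] by (simp add: cdf_rv_def)
qed

end

context mdl begin

lemma S_lowpos: assumes j: "j \<in> {1..ns}" shows "\<exists>s0>0. 0 < prob {\<omega>\<in>space M. s0 \<le> S j \<omega>}"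
proof -
  define A where "A n = {\<omega>\<in>space M. 1 / real (Suc n) \<le> S j \<omega>}" for n
  have Am: "range A \<subseteq> events" unfolding A_def using S_meas by auto
  have inc: "incseq A" unfolding A_def incseq_def
    by (auto elim!: order_trans[rotated] simp: frac_le)
  have "(\<Union>n. A n) = {\<omega>\<in>space M. 0 < S j \<omega>}"
  proof safe
    fix \<omega> assume "\<omega> \<in> space M" "0 < S j \<omega>"
    then obtain n where "1 / real (Suc n) < S j \<omega>" using reals_Archimedean
      by (metis inverse_eq_divide)
    then show "\<omega> \<in> (\<Union>n. A n)" using \<open>\<omega> \<in> space M\<close> by (auto simp: A_def intro!: exI[of _ n])
  qed (auto simp: A_def elim: less_le_trans[rotated])
  moreover have "prob {\<omega>\<in>space M. 0 < S j \<omega>} = 1"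
    using S_pos[OF j] S_meas by (intro prob_Collect_eq_1[THEN iffD2]) auto
  ultimately have "(\<lambda>n. prob (A n)) \<longlonglongrightarrow> 1"
    using finite_Lim_measure_incseq[OF Am inc] by simp
  then have "eventually (\<lambda>n. 0 < prob (A n)) sequentially"
    by (simp add: order_tendsto_iff)
  then obtain n where "0 < prob (A n)" by (auto simp: eventually_sequentially)
  then show ?thesis unfolding A_def by (intro exI[of _ "1 / real (Suc n)"]) auto
qed

lemma X_lowtail: assumes j: "j \<in> {1..ns}"
  shows "\<exists>c>0. \<exists>x0>0. \<forall>x\<ge>x0. c * x powr (- 1 / \<alpha>0) \<le> prob {\<omega>\<in>space M. x < X j \<omega>}"
proof -
  obtain s0 where s0: "0 < s0" "0 < prob {\<omega>\<in>space M. s0 \<le> S j \<omega>}" using S_lowpos[OF j] by blast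
  define p0 where "p0 = prob {\<omega>\<in>space M. s0 \<le> S j \<omega>}"
  define a where "a = s0 powr \<alpha>0"
  have a0': "0 < a" unfolding a_def using s0 by simp
  define c where "c = p0 / 2 * (1 / (a * \<tau>)) powr (- 1 / \<alpha>0)"
  have c0: "0 < c" unfolding c_def p0_def using s0 a0' tau by simp
  have "0 < a * \<tau>" using a0' tau by simp
  moreover have "\<forall>x\<ge>a * \<tau>. c * x powr (- 1 / \<alpha>0) \<le> prob {\<omega>\<in>space M. x < X j \<omega>}"
  proof (intro allI impI)
    fix x assume x: "a * \<tau> \<le> x"
    have xpos: "0 < x" using x a0' tau by (smt (verit) mult_pos_pos)
    have sub: "{\<omega>\<in>space M. s0 \<le> S j \<omega> \<and> x / a < eps j \<omega>} \<subseteq> {\<omega>\<in>space M. x < X j \<omega>}"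
    proof safe
      fix \<omega> assume \<omega>: "\<omega> \<in> space M" "s0 \<le> S j \<omega>" "x / a < eps j \<omega>"
      have "a \<le> S j \<omega> powr \<alpha>0" unfolding a_def using \<omega>(2) s0 a0 by (intro powr_mono2) auto
      moreover have "0 < eps j \<omega>" using \<omega>(3) xpos a0' by (smt (verit) divide_pos_pos)
      ultimately have "eps j \<omega> * a \<le> eps j \<omega> * S j \<omega> powr \<alpha>0" by simp
      moreover have "x < eps j \<omega> * a" using \<omega>(3) a0' by (simp add: field_simps)
      ultimately show "x < X j \<omega>" by (simp add: X_eq)
    qed
    have "prob {\<omega>\<in>space M. s0 \<le> S j \<omega> \<and> x / a < eps j \<omega>}
        = prob {\<omega>\<in>space M. S j \<omega> \<in> {s0..} \<and> eps j \<omega> \<in> {x/a<..}}" by simp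
    also have "\<dots> = prob {\<omega>\<in>space M. S j \<omega> \<in> {s0..}} * prob {\<omega>\<in>space M. eps j \<omega> \<in> {x/a<..}}"
      by (rule indep_prob[OF indep_S_eps[OF j]]) auto
    also have "\<dots> = p0 * (1 - Fe (x / a))"
      using eps_tail[OF j, of "x/a"] xpos a0' by (simp add: p0_def)
    finally have eq: "prob {\<omega>\<in>space M. s0 \<le> S j \<omega> \<and> x / a < eps j \<omega>} = p0 * (1 - Fe (x / a))" .
    have "\<tau> \<le> x / a" using x a0' by (simp add: field_simps mult.commute)
    then have lb: "(x / a / \<tau>) powr (- 1 / \<alpha>0) / 2 \<le> 1 - Fe (x / a)" by (rule Fe_lower)
    have "x / a / \<tau> = x * (1 / (a * \<tau>))" by simp
    then have "(x / a / \<tau>) powr (- 1 / \<alpha>0) = x powr (- 1 / \<alpha>0) * (1 / (a * \<tau>)) powr (- 1 / \<alpha>0)"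
      using xpos a0' tau by (simp only: powr_mult[symmetric])
    then have "c * x powr (- 1 / \<alpha>0) = p0 * ((x / a / \<tau>) powr (- 1 / \<alpha>0) / 2)"
      unfolding c_def by simp
    also have "\<dots> \<le> p0 * (1 - Fe (x / a))"
      using lb by (intro mult_left_mono) (auto simp: p0_def)
    also have "\<dots> \<le> prob {\<omega>\<in>space M. x < X j \<omega>}"
      unfolding eq[symmetric] using X_meas[OF j] by (intro finite_measure_mono[OF sub]) measurable
    finally show "c * x powr (- 1 / \<alpha>0) \<le> prob {\<omega>\<in>space M. x < X j \<omega>}" .
  qed
  ultimately show ?thesis using c0 by blast
qed

lemma q_growth: assumes j: "j \<in> {1..ns}"
  shows "\<exists>c>0. eventually (\<lambda>t. c * q j t powr (- 1 / \<alpha>0) \<le> 1 / t) at_top"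
proof -
  obtain c x0 where c: "0 < c" "0 < x0" "\<And>x. x0 \<le> x \<Longrightarrow> c * x powr (- 1 / \<alpha>0) \<le> prob {\<omega>\<in>space M. x < X j \<omega>}"
    using X_lowtail[OF j] by blast
  define b where "b = c * x0 powr (- 1 / \<alpha>0)"
  have b0: "0 < b" unfolding b_def using c by simp
  have "eventually (\<lambda>t. c * q j t powr (- 1 / \<alpha>0) \<le> 1 / t) at_top"
    unfolding eventually_at_top_linorder
  proof (intro exI[of _ "max 2 (2 / b)"] allI impI)
    fix t assume t: "max 2 (2 / b) \<le> t"
    then have t1: "1 < t" by simp
    have bt: "1 / t < b" using t b0 by (auto simp: field_simps)
    have qx0: "x0 \<le> q j t"
    proof (rule ccontr)
      assume "\<not> x0 \<le> q j t"
      then have "{\<omega>\<in>space M. x0 < X j \<omega>} \<subseteq> {\<omega>\<in>space M. q j t < X j \<omega>}" by auto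
      then have "prob {\<omega>\<in>space M. x0 < X j \<omega>} \<le> prob {\<omega>\<in>space M. q j t < X j \<omega>}"
        using X_meas[OF j] by (intro finite_measure_mono) measurable
      then have "b \<le> 1 / t" using c(3)[of x0] quant_tail[OF j t1] unfolding b_def by simp
      then show False using bt by simp
    qed
    show "c * q j t powr (- 1 / \<alpha>0) \<le> 1 / t"
      using c(3)[OF qx0] quant_tail[OF j t1] by simp
  qed
  then show ?thesis using c(1) by blast
qed

end


lemma second_diff_bound:
  fixes t0 a :: real
  assumes t0: "0 < t0" and a: "0 < a" "a < 1"
  defines "L \<equiv> (\<lambda>s. exp (- ((t0 + s) powr a - t0 powr a)))"
  shows "\<exists>C. \<forall>s. 0 < s \<longrightarrow> 1 - 2 * L s + L (2 * s) \<le> C * s^2"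
proof -
  define p1 where "p1 x = a * (t0 + x) powr (a - 1)" for x
  define p2 where "p2 x = a * (a - 1) * (t0 + x) powr (a - 2)" for x
  define L1 where "L1 x = - p1 x * L x" for x
  define L2 where "L2 x = (p1 x ^ 2 - p2 x) * L x" for x
  define B where "B = (a * t0 powr (a - 1))^2 + a * (1 - a) * t0 powr (a - 2)"
  have dL: "(L has_real_derivative L1 x) (at x)" if "0 \<le> x" for x
  proof -
    have "0 < t0 + x" using that t0 by simp
    then show ?thesis unfolding L_def L1_def p1_def
      by (auto intro!: derivative_eq_intros simp: L_def)
  qed
  have dp1: "(p1 has_real_derivative p2 x) (at x)" if "0 \<le> x" for x
  proof -
    have "0 < t0 + x" using that t0 by simp
    then have "((\<lambda>x. a * (t0 + x) powr (a - 1)) has_real_derivative a * ((a - 1) * (t0 + x) powr (a - 1 - 1) * (0 + 1))) (at x)"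
      by (intro derivative_eq_intros) auto
    moreover have "a - 1 - 1 = a - 2" by simp
    ultimately show ?thesis unfolding p1_def[abs_def] p2_def by (simp add: mult.assoc)
  qed
  have dL1: "(L1 has_real_derivative L2 x) (at x)" if "0 \<le> x" for x
  proof -
    have "((\<lambda>x. p1 x * L x) has_real_derivative (p2 x * L x + L1 x * p1 x)) (at x)"
      using DERIV_mult[OF dp1[OF that] dL[OF that]] by simp
    then have "((\<lambda>x. - (p1 x * L x)) has_real_derivative - (p2 x * L x + L1 x * p1 x)) (at x)"
      by (rule DERIV_minus)
    then show ?thesis unfolding L1_def[abs_def] L2_def by (simp add: power2_eq_square algebra_simps)
  qed
  have Lb: "0 < L x \<and> L x \<le> 1" if "0 \<le> x" for x
  proof -
    have "t0 powr a \<le> (t0 + x) powr a" using that t0 a by (intro powr_mono2) auto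
    then show ?thesis unfolding L_def by simp
  qed
  have L2b: "L2 x \<le> B" if "0 \<le> x" for x
  proof -
    have p1b: "0 \<le> p1 x" "p1 x \<le> a * t0 powr (a - 1)"
      unfolding p1_def using that t0 a by (auto intro!: mult_left_mono powr_mono2')
    have pw: "(t0 + x) powr (a - 2) \<le> t0 powr (a - 2)" using that t0 a by (intro powr_mono2') auto
    have "- p2 x = a * (1 - a) * (t0 + x) powr (a - 2)" unfolding p2_def by (simp add: algebra_simps)
    also have "\<dots> \<le> a * (1 - a) * t0 powr (a - 2)" using a pw by (intro mult_left_mono) auto
    finally have p2b: "- p2 x \<le> a * (1 - a) * t0 powr (a - 2)" .
    have p2n: "0 \<le> - p2 x" unfolding p2_def using a
      by (simp add: mult_nonneg_nonpos mult_nonpos_nonneg)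
    have "p1 x ^ 2 \<le> (a * t0 powr (a - 1))^2" using p1b by (intro power_mono) auto
    moreover have "0 \<le> p1 x ^ 2" by simp
    ultimately have "p1 x ^ 2 - p2 x \<le> B" "0 \<le> p1 x ^ 2 - p2 x" unfolding B_def using p2b p2n by linarith+
    then show ?thesis unfolding L2_def using Lb[OF that]
      by (smt (verit) mult_left_le mult_nonneg_nonneg)
  qed
  have "\<forall>s. 0 < s \<longrightarrow> 1 - 2 * L s + L (2 * s) \<le> (2 * B) * s^2"
  proof (intro allI impI)
    fix s :: real assume s: "0 < s"
    define h where "h x = 1 - 2 * L x + L (2 * x)" for x
    have dh: "(h has_real_derivative (2 * L1 (2 * x) - 2 * L1 x)) (at x)" if "0 \<le> x" for x
      unfolding h_def using that
      by (auto intro!: derivative_eq_intros dL[THEN DERIV_chain2] dL simp: algebra_simps)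
    have "h 0 = 0" unfolding h_def L_def by simp
    obtain xi where xi: "0 < xi" "xi < s" "h s - h 0 = (s - 0) * (2 * L1 (2 * xi) - 2 * L1 xi)"
      using MVT2[of 0 s h "\<lambda>x. 2 * L1 (2 * x) - 2 * L1 x"] s dh by auto
    obtain eta where eta: "xi < eta" "eta < 2 * xi" "L1 (2 * xi) - L1 xi = (2 * xi - xi) * L2 eta"
      using MVT2[of xi "2 * xi" L1 L2] xi dL1 by auto
    have "h s = s * (2 * (xi * L2 eta))" using xi eta \<open>h 0 = 0\<close> by (simp add: algebra_simps)
    also have "\<dots> \<le> s * (2 * (s * B))"
    proof -
      have "L2 eta \<le> B" using eta xi by (intro L2b) auto
      moreover have "0 \<le> B" unfolding B_def using t0 a by (auto intro!: mult_nonneg_nonneg)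
      ultimately have "xi * L2 eta \<le> s * B" using xi
        by (smt (verit) mult_left_mono mult_right_mono)
      then show ?thesis using s by simp
    qed
    finally show "1 - 2 * L s + L (2 * s) \<le> (2 * B) * s^2" unfolding h_def by (simp add: power2_eq_square algebra_simps)
  qed
  then show ?thesis by blast
qed



lemma lim_Suc_exp: "((\<lambda>n. real (Suc n) * (1 - exp (- z / real (Suc n)))) \<longlongrightarrow> (z::real)) sequentially"
  by real_asymp

context mdl begin

lemma Z2_int: assumes k: "k \<in> {1..K}" shows "integrable M (\<lambda>\<omega>. (Z k \<omega>)^2)"
proof -
  have th0: "0 < \<theta> k" using th k by auto
  obtain C where C: "\<And>s. 0 < s \<Longrightarrow> 1 - 2 * exp (- ((\<theta> k + s) powr \<alpha> - \<theta> k powr \<alpha>))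
      + exp (- ((\<theta> k + 2 * s) powr \<alpha> - \<theta> k powr \<alpha>)) \<le> C * s^2"
    using second_diff_bound[OF th0 a_pos a_lt] by blast
  have Zm: "Z k \<in> borel_measurable M" by (rule Z_meas[OF k])
  have eint: "integrable M (\<lambda>\<omega>. exp (- s * Z k \<omega>))" if "0 \<le> s" for s
  proof (rule integrable_const_bound[where B=1])
    have "AE \<omega> in M. 0 < Z k \<omega>" using Zpos k by auto
    then show "AE \<omega> in M. norm (exp (- s * Z k \<omega>)) \<le> 1"
      by eventually_elim (use that in \<open>auto intro!: mult_nonneg_nonneg\<close>)
  qed (use Zm in measurable)
  have lapk: "expectation (\<lambda>\<omega>. exp (- s * Z k \<omega>)) = exp (- ((\<theta> k + s) powr \<alpha> - \<theta> k powr \<alpha>))"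
    if "0 \<le> s" for s using lap k that by auto
  define f where "f n \<omega> = (real (Suc n))^2 * (1 - exp (- (1 / real (Suc n)) * Z k \<omega>))^2" for n \<omega>
  have fint: "integrable M (f n) \<and> integral\<^sup>L M (f n) \<le> C" for n
  proof -
    define s where "s = 1 / real (Suc n)"
    have s0: "0 < s" unfolding s_def by simp
    have feq: "f n \<omega> = (real (Suc n))^2 * (1 - 2 * exp (- s * Z k \<omega>) + exp (- (2 * s) * Z k \<omega>))" for \<omega>
    proof -
      have "exp (- (2 * s) * Z k \<omega>) = (exp (- s * Z k \<omega>))^2"
        by (simp add: power2_eq_square exp_add[symmetric])
      then show ?thesis unfolding f_def s_def by (simp add: power2_eq_square algebra_simps)
    qed
    have i1: "integrable M (\<lambda>\<omega>. exp (- s * Z k \<omega>))" using eint s0 by simp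
    have i2: "integrable M (\<lambda>\<omega>. exp (- (2 * s) * Z k \<omega>))" using eint s0 by simp
    have ig: "integrable M (\<lambda>\<omega>. 1 - 2 * exp (- s * Z k \<omega>) + exp (- (2 * s) * Z k \<omega>))"
      using i1 i2 by auto
    have "integral\<^sup>L M (\<lambda>\<omega>. 1 - 2 * exp (- s * Z k \<omega>) + exp (- (2 * s) * Z k \<omega>))
        = 1 - 2 * exp (- ((\<theta> k + s) powr \<alpha> - \<theta> k powr \<alpha>)) + exp (- ((\<theta> k + 2 * s) powr \<alpha> - \<theta> k powr \<alpha>))"
      using i1 i2 lapk[of s] lapk[of "2 * s"] s0 by (simp add: prob_space)
    also have "\<dots> \<le> C * s^2" by (rule C[OF s0])
    finally have "integral\<^sup>L M (f n) \<le> (real (Suc n))^2 * (C * s^2)"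
      unfolding feq using ig by (simp add: mult_left_mono)
    also have "\<dots> = C" unfolding s_def by (simp add: power2_eq_square)
    finally show ?thesis unfolding feq using ig by auto
  qed
  have fnn: "0 \<le> f n \<omega>" for n \<omega> unfolding f_def by simp
  have fm: "f n \<in> borel_measurable M" for n unfolding f_def using Zm by measurable
  have "(\<integral>\<^sup>+ \<omega>. ennreal ((Z k \<omega>)^2) \<partial>M) = (\<integral>\<^sup>+ \<omega>. liminf (\<lambda>n. ennreal (f n \<omega>)) \<partial>M)"
  proof (intro nn_integral_cong)
    fix \<omega>
    have "(\<lambda>n. f n \<omega>) \<longlonglongrightarrow> (Z k \<omega>)^2"
      unfolding f_def using tendsto_power[OF lim_Suc_exp[of "Z k \<omega>"], of 2]
      by (simp add: power_mult_distrib)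
    then have "(\<lambda>n. ennreal (f n \<omega>)) \<longlonglongrightarrow> ennreal ((Z k \<omega>)^2)"
      by (rule tendsto_ennrealI)
    then show "ennreal ((Z k \<omega>)^2) = liminf (\<lambda>n. ennreal (f n \<omega>))"
      by (simp add: lim_imp_Liminf)
  qed
  also have "\<dots> \<le> liminf (\<lambda>n. \<integral>\<^sup>+ \<omega>. ennreal (f n \<omega>) \<partial>M)"
    by (rule nn_integral_liminf) (use fm in measurable)
  also have "\<dots> \<le> ennreal C"
  proof (intro Liminf_le always_eventually allI)
    fix n
    show "(\<integral>\<^sup>+ \<omega>. ennreal (f n \<omega>) \<partial>M) \<le> ennreal C"
      using fint[of n] fnn by (subst nn_integral_eq_integral) (auto intro!: ennreal_leI)
  qed simp
  also have "\<dots> < \<infinity>" by simp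
  finally show ?thesis
    by (intro integrableI_bounded) (use Zm in \<open>auto\<close>)
qed

lemma S2_int: assumes j: "j \<in> {1..ns}" shows "integrable M (\<lambda>\<omega>. (S j \<omega>)^2)"
proof -
  have i: "integrable M (\<lambda>\<omega>. (\<Sum>k=1..K. (w k j powr (1/\<alpha>) * Z k \<omega>)^2) * real (card {1..K}))"
    using Z2_int by (auto intro!: integrable_sum simp: power_mult_distrib)
  have m: "(\<lambda>\<omega>. (S j \<omega>)^2) \<in> borel_measurable M" using S_meas by measurable
  have ae: "AE \<omega> in M. norm ((S j \<omega>)^2) \<le> norm ((\<Sum>k=1..K. (w k j powr (1/\<alpha>) * Z k \<omega>)^2) * real (card {1..K}))"
  proof (intro AE_I2)
    fix \<omega>
    have "(S j \<omega>)^2 \<le> (\<Sum>k=1..K. (w k j powr (1/\<alpha>) * Z k \<omega>)^2) * real (card {1..K})"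
      unfolding S_def by (rule sum_squared_le_sum_of_squares)
    moreover have "0 \<le> (\<Sum>k=1..K. (w k j powr (1/\<alpha>) * Z k \<omega>)^2) * real (card {1..K})" by (intro mult_nonneg_nonneg sum_nonneg) auto
    ultimately show "norm ((S j \<omega>)^2) \<le> norm ((\<Sum>k=1..K. (w k j powr (1/\<alpha>) * Z k \<omega>)^2) * real (card {1..K}))"
      by simp
  qed
  show ?thesis using Bochner_Integration.integrable_bound[OF i m ae] .
qed

end

context mdl begin

lemma sq_tail: assumes j: "j \<in> {1..ns}"
  shows "((\<lambda>r. r^2 * prob {\<omega>\<in>space M. r < S j \<omega>}) \<longlongrightarrow> 0) at_top"
proof -
  define g where "g r \<omega> = (if r < S j \<omega> then (S j \<omega>)^2 else 0)" for r \<omega>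
  have Sm: "S j \<in> borel_measurable M" by (rule S_meas)
  have gm: "g r \<in> borel_measurable M" for r unfolding g_def using Sm by measurable
  have lim: "((\<lambda>r. integral\<^sup>L M (g r)) \<longlongrightarrow> integral\<^sup>L M (\<lambda>\<omega>. 0::real)) at_top"
  proof (rule integral_dominated_convergence_at_top[where w="\<lambda>\<omega>. (S j \<omega>)^2"])
    show "(\<lambda>\<omega>. 0::real) \<in> borel_measurable M" by simp
    show "g r \<in> borel_measurable M" for r by (rule gm)
    show "integrable M (\<lambda>\<omega>. (S j \<omega>)^2)" by (rule S2_int[OF j])
    show "AE \<omega> in M. ((\<lambda>r. g r \<omega>) \<longlongrightarrow> 0) at_top"
    proof (intro AE_I2)
      fix \<omega>
      have "eventually (\<lambda>r. g r \<omega> = 0) at_top"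
        unfolding g_def eventually_at_top_linorder by (intro exI[of _ "S j \<omega>"]) auto
      then show "((\<lambda>r. g r \<omega>) \<longlongrightarrow> 0) at_top" by (rule tendsto_eventually)
    qed
    show "\<forall>\<^sub>F r in at_top. AE \<omega> in M. norm (g r \<omega>) \<le> (S j \<omega>)^2"
      by (intro always_eventually allI AE_I2) (simp add: g_def)
  qed
  have bnd: "eventually (\<lambda>r. r^2 * prob {\<omega>\<in>space M. r < S j \<omega>} \<le> integral\<^sup>L M (g r)) at_top"
    unfolding eventually_at_top_linorder
  proof (intro exI[of _ 0] allI impI)
    fix r :: real assume r: "0 \<le> r"
    have A: "{\<omega>\<in>space M. r < S j \<omega>} \<in> sets M" using Sm by measurable
    have "r^2 * prob {\<omega>\<in>space M. r < S j \<omega>} = integral\<^sup>L M (\<lambda>\<omega>. r^2 * indicator {\<omega>\<in>space M. r < S j \<omega>} \<omega>)"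
      using A by (simp add: Int_absorb2 sets.sets_into_space)
    also have "\<dots> \<le> integral\<^sup>L M (g r)"
    proof (rule integral_mono)
      show "integrable M (\<lambda>\<omega>. r^2 * indicator {\<omega>\<in>space M. r < S j \<omega>} \<omega>)"
        using A by (intro integrable_mult_right integrable_real_indicator) (auto simp: less_top[symmetric])
      show "integrable M (g r)"
        using S2_int[OF j] gm by (rule Bochner_Integration.integrable_bound) (auto simp: g_def)
      fix \<omega> assume "\<omega> \<in> space M"
      show "r^2 * indicator {\<omega>\<in>space M. r < S j \<omega>} \<omega> \<le> g r \<omega>"
        using r by (auto simp: g_def indicator_def intro!: power_mono)
    qed
    finally show "r^2 * prob {\<omega>\<in>space M. r < S j \<omega>} \<le> integral\<^sup>L M (g r)" .
  qed
  show ?thesis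
    by (rule tendsto_sandwich[OF _ bnd tendsto_const lim[simplified]])
       (auto intro!: always_eventually)
qed

end


lemma powr_aux: fixes q m tau a :: real
  assumes "0 < q" "0 < m" "0 < tau" "0 < a"
  shows "((q / m powr a) / tau) powr (-1/a) = m * tau powr (1/a) * q powr (-1/a)"
proof -
  have "((q / m powr a) / tau) powr (-1/a) = q powr (-1/a) / ((m powr a) powr (-1/a) * tau powr (-1/a))"
    using assms by (simp add: powr_divide powr_mult)
  also have "(m powr a) powr (-1/a) = m powr (-1)" using assms by (simp add: powr_powr)
  also have "m powr (-1) = 1 / m" using assms by (simp add: powr_minus_divide)
  also have "tau powr (-1/a) = 1 / tau powr (1/a)" using assms
    by (metis minus_divide_left powr_minus_divide)
  finally show ?thesis using assms by (simp add: field_simps)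
qed

context mdl begin

lemma pair_bound:
  assumes i: "i \<in> {1..ns}" and j: "j \<in> {1..ns}" and ij: "i \<noteq> j"
    and a: "0 < a" and b: "0 < b" and m: "0 < m"
  shows "prob {\<omega>\<in>space M. a < X i \<omega> \<and> b < X j \<omega>}
    \<le> prob {\<omega>\<in>space M. m < S i \<omega>} + prob {\<omega>\<in>space M. m < S j \<omega>}
      + (m * \<tau> powr (1/\<alpha>0) * a powr (-1/\<alpha>0)) * (m * \<tau> powr (1/\<alpha>0) * b powr (-1/\<alpha>0))"
proof -
  let ?P = "{\<omega>\<in>space M. a < X i \<omega> \<and> b < X j \<omega>}"
  let ?G = "{\<omega>\<in>space M. a < X i \<omega> \<and> b < X j \<omega> \<and> 0 < S i \<omega> \<and> 0 < S j \<omega>}"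
  let ?A = "{\<omega>\<in>space M. m < S i \<omega>}" and ?B = "{\<omega>\<in>space M. m < S j \<omega>}"
  let ?E = "{\<omega>\<in>space M. eps i \<omega> \<in> {a / m powr \<alpha>0<..} \<and> eps j \<omega> \<in> {b / m powr \<alpha>0<..}}"
  have meas: "X i \<in> borel_measurable M" "X j \<in> borel_measurable M" "S i \<in> borel_measurable M"
    "S j \<in> borel_measurable M" "eps i \<in> borel_measurable M" "eps j \<in> borel_measurable M"
    using X_meas[OF i] X_meas[OF j] S_meas eps_meas[OF i] eps_meas[OF j] by auto
  have "prob ?P = prob ?G"
  proof (rule prob_eq_AE)
    show "AE \<omega> in M. (a < X i \<omega> \<and> b < X j \<omega>) = (a < X i \<omega> \<and> b < X j \<omega> \<and> 0 < S i \<omega> \<and> 0 < S j \<omega>)"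
      using S_pos[OF i] S_pos[OF j] by eventually_elim auto
  qed (use meas in measurable)
  also have "\<dots> \<le> prob (?A \<union> ?B \<union> ?E)"
  proof (rule finite_measure_mono)
    show "?G \<subseteq> ?A \<union> ?B \<union> ?E"
    proof
      fix \<omega> assume "\<omega> \<in> ?G"
      then have \<omega>: "\<omega> \<in> space M" "a < X i \<omega>" "b < X j \<omega>" "0 < S i \<omega>" "0 < S j \<omega>" by auto
      show "\<omega> \<in> ?A \<union> ?B \<union> ?E"
      proof (cases "m < S i \<omega> \<or> m < S j \<omega>")
        case True then show ?thesis using \<omega> by auto
      next
        case False
      have one: "c / m powr \<alpha>0 < eps l \<omega>" if "0 < c" "c < X l \<omega>" "0 < S l \<omega>" "S l \<omega> \<le> m" for c l
      proof -
        have pw: "0 < S l \<omega> powr \<alpha>0" "S l \<omega> powr \<alpha>0 \<le> m powr \<alpha>0"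
          using that a0 by (auto intro!: powr_mono2)
        have "c < eps l \<omega> * S l \<omega> powr \<alpha>0" using that by (simp add: X_eq)
        then have ep: "0 < eps l \<omega>" using that pw by (smt (verit) mult_nonpos_nonneg)
        then have "eps l \<omega> * S l \<omega> powr \<alpha>0 \<le> eps l \<omega> * m powr \<alpha>0" using pw by simp
        then have "c < eps l \<omega> * m powr \<alpha>0" using \<open>c < eps l \<omega> * S l \<omega> powr \<alpha>0\<close> by simp
        then show ?thesis using m by (simp add: field_simps)
      qed
      show ?thesis using one[of a i] one[of b j] \<omega> a b False by auto
      qed
    qed
  qed (use meas in measurable)
  also have "\<dots> \<le> prob ?A + prob ?B + prob ?E"
  proof -
    have s: "?A \<in> sets M" "?B \<in> sets M" "?E \<in> sets M" using meas by measurable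
    have "prob (?A \<union> ?B \<union> ?E) \<le> prob (?A \<union> ?B) + prob ?E" by (intro measure_Un_le sets.Un s)
    also have "prob (?A \<union> ?B) \<le> prob ?A + prob ?B" by (intro measure_Un_le s)
    finally show ?thesis by simp
  qed
  also have "prob ?E = prob {\<omega>\<in>space M. eps i \<omega> \<in> {a / m powr \<alpha>0<..}} * prob {\<omega>\<in>space M. eps j \<omega> \<in> {b / m powr \<alpha>0<..}}"
    by (rule indep_prob[OF indep_eps[OF i j ij]]) auto
  also have "\<dots> \<le> (m * \<tau> powr (1/\<alpha>0) * a powr (-1/\<alpha>0)) * (m * \<tau> powr (1/\<alpha>0) * b powr (-1/\<alpha>0))"
  proof (rule mult_mono)
    have "prob {\<omega>\<in>space M. eps i \<omega> \<in> {a / m powr \<alpha>0<..}} = 1 - Fe (a / m powr \<alpha>0)"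
      using eps_tail[OF i, of "a / m powr \<alpha>0"] a m by simp
    also have "\<dots> \<le> ((a / m powr \<alpha>0) / \<tau>) powr (-1/\<alpha>0)" using a m by (intro Fe_upper) simp
    also have "\<dots> = m * \<tau> powr (1/\<alpha>0) * a powr (-1/\<alpha>0)" using a m tau a0 by (rule powr_aux)
    finally show "prob {\<omega>\<in>space M. eps i \<omega> \<in> {a / m powr \<alpha>0<..}} \<le> m * \<tau> powr (1/\<alpha>0) * a powr (-1/\<alpha>0)" .
    have "prob {\<omega>\<in>space M. eps j \<omega> \<in> {b / m powr \<alpha>0<..}} = 1 - Fe (b / m powr \<alpha>0)"
      using eps_tail[OF j, of "b / m powr \<alpha>0"] b m by simp
    also have "\<dots> \<le> ((b / m powr \<alpha>0) / \<tau>) powr (-1/\<alpha>0)" using b m by (intro Fe_upper) simp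
    also have "\<dots> = m * \<tau> powr (1/\<alpha>0) * b powr (-1/\<alpha>0)" using b m tau a0 by (rule powr_aux)
    finally show "prob {\<omega>\<in>space M. eps j \<omega> \<in> {b / m powr \<alpha>0<..}} \<le> m * \<tau> powr (1/\<alpha>0) * b powr (-1/\<alpha>0)" .
  qed (use m tau in auto)
  finally show ?thesis by simp
qed

end


lemma sqrt_lim: "0 < (d::real) \<Longrightarrow> filterlim (\<lambda>t. d * sqrt t) at_top at_top"
  by real_asymp

context mdl begin

lemma pair_lim:
  assumes i: "i \<in> {1..ns}" and j: "j \<in> {1..ns}" and ij: "i \<noteq> j"
  shows "((\<lambda>t. t * prob {\<omega>\<in>space M. q i t < X i \<omega> \<and> q j t < X j \<omega>}) \<longlongrightarrow> 0) at_top"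
proof -
  obtain ci where ci: "0 < ci" "eventually (\<lambda>t. ci * q i t powr (- 1 / \<alpha>0) \<le> 1 / t) at_top"
    using q_growth[OF i] by blast
  obtain cj where cj: "0 < cj" "eventually (\<lambda>t. cj * q j t powr (- 1 / \<alpha>0) \<le> 1 / t) at_top"
    using q_growth[OF j] by blast
  define T where "T = \<tau> powr (1/\<alpha>0)"
  define B where "B = T^2 / (ci * cj)"
  have B0: "0 \<le> B" unfolding B_def T_def using ci cj by simp
  let ?P = "\<lambda>t. prob {\<omega>\<in>space M. q i t < X i \<omega> \<and> q j t < X j \<omega>}"
  show ?thesis
    unfolding tendsto_iff
  proof (intro allI impI)
    fix e :: real assume e: "0 < e"
    define d where "d = sqrt (e / (2 * (B + 1)))"
    have d0: "0 < d" unfolding d_def using e B0 by simp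
    have dd: "d^2 = e / (2 * (B + 1))" unfolding d_def using e B0 by simp
    have Bd: "B * d^2 < e / 2" unfolding dd using e B0 by (simp add: field_simps)
    have ti: "eventually (\<lambda>t. (d * sqrt t)^2 * prob {\<omega>\<in>space M. d * sqrt t < S i \<omega>} < d^2 * e / 4) at_top"
      using order_tendstoD(2)[OF filterlim_compose[OF sq_tail[OF i] sqrt_lim[OF d0]], of "d^2 * e / 4"] d0 e
      by simp
    have tj: "eventually (\<lambda>t. (d * sqrt t)^2 * prob {\<omega>\<in>space M. d * sqrt t < S j \<omega>} < d^2 * e / 4) at_top"
      using order_tendstoD(2)[OF filterlim_compose[OF sq_tail[OF j] sqrt_lim[OF d0]], of "d^2 * e / 4"] d0 e
      by simp
    have t1: "eventually (\<lambda>t. 1 < (t::real)) at_top" by (rule eventually_gt_at_top)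
    show "eventually (\<lambda>t. dist (t * ?P t) 0 < e) at_top"
      using ti tj t1 ci(2) cj(2)
    proof eventually_elim
      case (elim t)
      define m where "m = d * sqrt t"
      have t0: "0 < t" using elim by simp
      have m0: "0 < m" unfolding m_def using d0 t0 by simp
      have m2: "m^2 = d^2 * t" unfolding m_def using t0 by (simp add: power_mult_distrib)
      have qi: "0 < q i t" and qj: "0 < q j t" using quant(1)[OF i elim(3)] quant(1)[OF j elim(3)] by auto
      have pb: "?P t \<le> prob {\<omega>\<in>space M. m < S i \<omega>} + prob {\<omega>\<in>space M. m < S j \<omega>}
          + (m * T * q i t powr (-1/\<alpha>0)) * (m * T * q j t powr (-1/\<alpha>0))"
        using pair_bound[OF i j ij qi qj m0] unfolding T_def by simp
      have T0: "0 \<le> T" unfolding T_def by simp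
      have qi': "q i t powr (-1/\<alpha>0) \<le> 1 / (ci * t)" using elim(4) ci(1) t0
        by (simp add: field_simps)
      have qj': "q j t powr (-1/\<alpha>0) \<le> 1 / (cj * t)" using elim(5) cj(1) t0
        by (simp add: field_simps)
      have "(m * T * q i t powr (-1/\<alpha>0)) * (m * T * q j t powr (-1/\<alpha>0))
          = m^2 * T^2 * (q i t powr (-1/\<alpha>0) * q j t powr (-1/\<alpha>0))" by (simp add: power2_eq_square)
      also have "\<dots> \<le> m^2 * T^2 * (1 / (ci * t) * (1 / (cj * t)))"
        using qi' qj' ci(1) cj(1) t0 by (intro mult_left_mono mult_mono) auto
      also have "\<dots> = B * d^2 / t" unfolding m2 B_def using t0 by (simp add: field_simps power2_eq_square)
      finally have third: "t * ((m * T * q i t powr (-1/\<alpha>0)) * (m * T * q j t powr (-1/\<alpha>0))) \<le> B * d^2"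
        using t0 by (simp add: field_simps)
      have fi: "t * prob {\<omega>\<in>space M. m < S i \<omega>} < e / 4"
      proof -
        have "m^2 * prob {\<omega>\<in>space M. m < S i \<omega>} < d^2 * e / 4" using elim(1) unfolding m_def .
        then have "d^2 * (t * prob {\<omega>\<in>space M. m < S i \<omega>}) < d^2 * (e / 4)" unfolding m2 by (simp add: algebra_simps)
        then show ?thesis using d0 by simp
      qed
      have fj: "t * prob {\<omega>\<in>space M. m < S j \<omega>} < e / 4"
      proof -
        have "m^2 * prob {\<omega>\<in>space M. m < S j \<omega>} < d^2 * e / 4" using elim(2) unfolding m_def .
        then have "d^2 * (t * prob {\<omega>\<in>space M. m < S j \<omega>}) < d^2 * (e / 4)" unfolding m2 by (simp add: algebra_simps)
        then show ?thesis using d0 by simp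
      qed
      have "t * ?P t \<le> t * prob {\<omega>\<in>space M. m < S i \<omega>} + t * prob {\<omega>\<in>space M. m < S j \<omega>}
          + t * ((m * T * q i t powr (-1/\<alpha>0)) * (m * T * q j t powr (-1/\<alpha>0)))"
        using mult_left_mono[OF pb, of t] t0 by (simp add: algebra_simps)
      also have "\<dots> < e" using fi fj third Bd by linarith
      finally have "t * ?P t < e" .
      moreover have "0 \<le> t * ?P t" using t0 by simp
      ultimately show ?case by simp
    qed
  qed
qed

end


lemma (in prob_space) bonf:
  assumes "finite I" "\<And>i. i \<in> I \<Longrightarrow> A i \<in> events"
  shows "(\<Sum>i\<in>I. prob (A i)) - (\<Sum>i\<in>I. \<Sum>j\<in>I-{i}. prob (A i \<inter> A j)) \<le> prob (\<Union>i\<in>I. A i)"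
  using assms
proof (induction I rule: finite_induct)
  case empty
  then show ?case by simp
next
  case (insert a F)
  let ?U = "\<Union>i\<in>F. A i"
  have Aa: "A a \<in> events" using insert by auto
  have U: "?U \<in> events" using insert by auto
  have IH: "(\<Sum>i\<in>F. prob (A i)) - (\<Sum>i\<in>F. \<Sum>j\<in>F-{i}. prob (A i \<inter> A j)) \<le> prob ?U"
    using insert by auto
  have inner: "(\<Sum>j\<in>insert a F - {i}. prob (A i \<inter> A j)) = prob (A i \<inter> A a) + (\<Sum>j\<in>F-{i}. prob (A i \<inter> A j))"
    if "i \<in> F" for i
  proof -
    have "insert a F - {i} = insert a (F - {i})" using that insert by auto
    then show ?thesis using insert by simp
  qed
  have "(\<Sum>i\<in>insert a F. \<Sum>j\<in>insert a F-{i}. prob (A i \<inter> A j))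
      = (\<Sum>j\<in>F. prob (A a \<inter> A j)) + (\<Sum>i\<in>F. prob (A i \<inter> A a) + (\<Sum>j\<in>F-{i}. prob (A i \<inter> A j)))"
    using insert inner by (simp add: Diff_insert_absorb)
  also have "\<dots> \<ge> (\<Sum>j\<in>F. prob (A a \<inter> A j)) + (\<Sum>i\<in>F. \<Sum>j\<in>F-{i}. prob (A i \<inter> A j))"
    by (intro add_left_mono sum_mono) auto
  finally have S: "(\<Sum>i\<in>insert a F. \<Sum>j\<in>insert a F-{i}. prob (A i \<inter> A j))
      \<ge> (\<Sum>j\<in>F. prob (A a \<inter> A j)) + (\<Sum>i\<in>F. \<Sum>j\<in>F-{i}. prob (A i \<inter> A j))" .
  have "A a \<inter> ?U = (\<Union>j\<in>F. A a \<inter> A j)" by blast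
  then have "prob (A a \<inter> ?U) = prob (\<Union>j\<in>F. A a \<inter> A j)" by simp
  also have "\<dots> \<le> (\<Sum>j\<in>F. prob (A a \<inter> A j))"
  proof (rule finite_measure_subadditive_finite)
    show "finite F" by (rule insert.hyps)
    show "(\<lambda>j. A a \<inter> A j) ` F \<subseteq> events" using insert.prems by blast
  qed
  finally have I: "prob (A a \<inter> ?U) \<le> (\<Sum>j\<in>F. prob (A a \<inter> A j))" .
  have "prob (\<Union>i\<in>insert a F. A i) = prob (A a \<union> ?U)" by simp
  also have "\<dots> = prob (A a) + prob ?U - prob (A a \<inter> ?U)"
  proof -
    have "A a \<in> fmeasurable M" "?U \<in> fmeasurable M" using Aa U fmeasurable_eq_sets by auto
    then show ?thesis by (rule measure_Un3)
  qed
  finally have E: "prob (\<Union>i\<in>insert a F. A i) = prob (A a) + prob ?U - prob (A a \<inter> ?U)" .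
  have "(\<Sum>i\<in>insert a F. prob (A i)) = prob (A a) + (\<Sum>i\<in>F. prob (A i))"
    using insert.hyps by simp
  then show ?case using S I E IH by linarith
qed

context mdl begin

lemma main_lim:
  shows "((\<lambda>t. t * (1 - joint_cdf M X ns (\<lambda>j. gen_inv (cdf_rv M (X j)) (1 - 1 / t)))) \<longlongrightarrow> real ns) at_top"
proof -
  define I where "I = {1..ns}"
  define A where "A t j = {\<omega>\<in>space M. q j t < X j \<omega>}" for t j
  have Am: "A t j \<in> events" if "j \<in> I" for t j
  proof -
    have [measurable]: "X j \<in> borel_measurable M" using X_meas that I_def by auto
    show ?thesis unfolding A_def by measurable
  qed
  have eq: "t * (1 - joint_cdf M X ns (\<lambda>j. gen_inv (cdf_rv M (X j)) (1 - 1 / t))) = t * prob (\<Union>j\<in>I. A t j)"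
    for t
  proof -
    have "joint_cdf M X ns (\<lambda>j. gen_inv (cdf_rv M (X j)) (1 - 1 / t)) = prob (space M - (\<Union>j\<in>I. A t j))"
      unfolding joint_cdf_def q_def[symmetric] A_def I_def by (auto intro!: arg_cong[where f=prob])
    also have "\<dots> = 1 - prob (\<Union>j\<in>I. A t j)" using Am by (intro prob_compl) (auto simp: I_def)
    finally show ?thesis by simp
  qed
  define D where "D t = t * (\<Sum>i\<in>I. \<Sum>j\<in>I-{i}. prob (A t i \<inter> A t j))" for t
  have D: "(D \<longlongrightarrow> 0) at_top"
  proof -
    have "((\<lambda>t. \<Sum>i\<in>I. \<Sum>j\<in>I-{i}. t * prob (A t i \<inter> A t j)) \<longlongrightarrow> (\<Sum>i\<in>I. \<Sum>j\<in>I-{i}. 0)) at_top"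
    proof (intro tendsto_sum)
      fix i j assume "i \<in> I" "j \<in> I - {i}"
      then have "i \<in> {1..ns}" "j \<in> {1..ns}" "i \<noteq> j" by (auto simp: I_def)
      have "A t i \<inter> A t j = {\<omega>\<in>space M. q i t < X i \<omega> \<and> q j t < X j \<omega>}" for t
        unfolding A_def by auto
      then show "((\<lambda>t. t * prob (A t i \<inter> A t j)) \<longlongrightarrow> 0) at_top"
        using pair_lim[OF \<open>i \<in> {1..ns}\<close> \<open>j \<in> {1..ns}\<close> \<open>i \<noteq> j\<close>] by simp
    qed
    then show ?thesis unfolding D_def by (simp add: sum_distrib_left)
  qed
  have up: "eventually (\<lambda>t. t * prob (\<Union>j\<in>I. A t j) \<le> real ns) at_top"
    using eventually_gt_at_top[of 1]
  proof eventually_elim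
    case (elim t)
    have "prob (\<Union>j\<in>I. A t j) \<le> (\<Sum>j\<in>I. prob (A t j))"
      using Am by (intro finite_measure_subadditive_finite) (auto simp: I_def)
    also have "\<dots> = real ns / t"
      using quant_tail elim by (simp add: A_def I_def)
    finally show ?case using elim by (simp add: field_simps)
  qed
  have low: "eventually (\<lambda>t. real ns - D t \<le> t * prob (\<Union>j\<in>I. A t j)) at_top"
    using eventually_gt_at_top[of 1]
  proof eventually_elim
    case (elim t)
    have "(\<Sum>j\<in>I. prob (A t j)) - (\<Sum>i\<in>I. \<Sum>j\<in>I-{i}. prob (A t i \<inter> A t j)) \<le> prob (\<Union>j\<in>I. A t j)"
      using Am by (intro bonf) (auto simp: I_def)
    moreover have "(\<Sum>j\<in>I. prob (A t j)) = real ns / t"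
      using quant_tail elim by (simp add: A_def I_def)
    ultimately have "real ns / t - D t / t \<le> prob (\<Union>j\<in>I. A t j)" using elim by (simp add: D_def)
    then have "t * (real ns / t - D t / t) \<le> t * prob (\<Union>j\<in>I. A t j)" using elim by (intro mult_left_mono) auto
    moreover have "t * (real ns / t - D t / t) = real ns - D t" using elim by (simp add: field_simps)
    ultimately show ?case by simp
  qed
  have "((\<lambda>t. real ns - D t) \<longlongrightarrow> real ns - 0) at_top" by (intro tendsto_diff tendsto_const D)
  then have "((\<lambda>t. t * prob (\<Union>j\<in>I. A t j)) \<longlongrightarrow> real ns) at_top"
    using tendsto_sandwich[OF low up _ tendsto_const] by simp
  then show ?thesis unfolding eq .
qed

end

theorem mainTheorem7:
  fixes M :: "'a measure"
    and \<alpha> \<alpha>0 \<tau> :: real and K ns :: nat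
    and \<theta> :: "nat \<Rightarrow> real" and w :: "nat \<Rightarrow> nat \<Rightarrow> real"
    and Z eps :: "nat \<Rightarrow> 'a \<Rightarrow> real"
  assumes "prob_space M"
    and "0 < \<alpha>" "\<alpha> < 1" "0 < \<alpha>0" "0 < \<tau>" "1 \<le> K"
    and "\<forall>k\<in>{1..K}. 0 < \<theta> k"
    and "\<forall>k\<in>{1..K}. \<forall>j\<in>{1..ns}. 0 \<le> w k j"
    and "\<forall>j\<in>{1..ns}. \<exists>k\<in>{1..K}. w k j \<noteq> 0"
    and "prob_space.indep_vars M (\<lambda>_. borel) (case_sum Z eps) (Inl ` {1..K} \<union> Inr ` {1..ns})"
    and "\<forall>k\<in>{1..K}. AE \<omega> in M. 0 < Z k \<omega>"
    and "\<forall>k\<in>{1..K}. \<forall>s::real. 0 \<le> s \<longrightarrow>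
           prob_space.expectation M (\<lambda>\<omega>. exp (- s * Z k \<omega>))
             = exp (- ((\<theta> k + s) powr \<alpha> - \<theta> k powr \<alpha>))"
    and "\<forall>j\<in>{1..ns}. \<forall>x::real. 0 < x \<longrightarrow>
           cdf_rv M (eps j) x = exp (- ((x / \<tau>) powr (- 1 / \<alpha>0)))"
  shows "((\<lambda>t. t * (1 - joint_cdf M (model_X \<alpha> \<alpha>0 K w Z eps) ns
              (\<lambda>j. gen_inv (cdf_rv M (model_X \<alpha> \<alpha>0 K w Z eps j)) (1 - 1 / t))))
          \<longlongrightarrow> real ns) at_top"
proof -
  have "mdl M \<alpha> \<alpha>0 \<tau> K ns \<theta> w Z eps"
    unfolding mdl_def mdl_axioms_def using assms by auto
  then show ?thesis by (rule mdl.main_lim)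
qed

end
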